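(* Let $\mathcal C\subseteq\{0,1,2\}^n$ be a trifferent code with $|\mathcal C|\ge2$. For $x,y\in\mathcal C$ let $A(x,y)=|\{i\in[n]:x_i=y_i\}|$. Then \[ \sum_{\{x,y\}\subseteq\mathcal C,\ x\ne y}2^{A(x,y)}\ \le\ 2^{n-1}|\mathcal C| . \]
   Context: Three distinct strings $x,y,z\in\{0,1,2\}^n$ are trifferent if there is a coordinate $i\in[n]$ with $x_i,y_i,z_i$ mutually distinct. A trifferent code of block length $n$ is a subset $\mathcal C\subseteq\{0,1,2\}^n$ in which any three distinct codewords are trifferent. *)

theory Defs
  imports Main
begin

definition ternary_words :: "nat \<Rightarrow> nat list set" where
  "ternary_words n = {x. length x = n \<and> set x \<subseteq> {0,1,2}}"

definition trifferent :: "nat \<Rightarrow> nat list \<Rightarrow> nat list \<Rightarrow> nat list \<Rightarrow> bool" where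
  "trifferent n x y z \<longleftrightarrow> (\<exists>i<n. x ! i \<noteq> y ! i \<and> y ! i \<noteq> z ! i \<and> x ! i \<noteq> z ! i)"

definition trifferent_code :: "nat \<Rightarrow> nat list set \<Rightarrow> bool" where
  "trifferent_code n C \<longleftrightarrow> C \<subseteq> ternary_words n \<and>
     (\<forall>x\<in>C. \<forall>y\<in>C. \<forall>z\<in>C. x \<noteq> y \<and> y \<noteq> z \<and> x \<noteq> z \<longrightarrow> trifferent n x y z)"

definition agree :: "nat \<Rightarrow> nat list \<Rightarrow> nat list \<Rightarrow> nat" where
  "agree n x y = card {i. i < n \<and> x ! i = y ! i}"

end

theory Submission
  imports Defs
begin

lemma card_lists:
  "card {z. length z = n \<and> (\<forall>i<n. z ! i \<in> S i)} = (\<Prod>i<n. card (S i))"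
proof (induction n arbitrary: S)
  case 0
  then show ?case by simp
next
  case (Suc n)
  have eq: "{z. length z = Suc n \<and> (\<forall>i<Suc n. z ! i \<in> S i)} =
    (\<lambda>(a,z). a # z) ` (S 0 \<times> {z. length z = n \<and> (\<forall>i<n. z ! i \<in> S (Suc i))})"
  proof
    show "{z. length z = Suc n \<and> (\<forall>i<Suc n. z ! i \<in> S i)} \<subseteq>
    (\<lambda>(a,z). a # z) ` (S 0 \<times> {z. length z = n \<and> (\<forall>i<n. z ! i \<in> S (Suc i))})"
    proof
      fix z assume "z \<in> {z. length z = Suc n \<and> (\<forall>i<Suc n. z ! i \<in> S i)}"
      then obtain a w where z: "z = a # w" "length w = n" and h: "\<forall>i<Suc n. z ! i \<in> S i"
        by (auto simp: length_Suc_conv)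
      have "a \<in> S 0" using h z by auto
      moreover have "\<forall>i<n. w ! i \<in> S (Suc i)" using h z by auto
      ultimately show "z \<in> (\<lambda>(a,z). a # z) ` (S 0 \<times> {z. length z = n \<and> (\<forall>i<n. z ! i \<in> S (Suc i))})"
        using z by force
    qed
  next
    show "(\<lambda>(a,z). a # z) ` (S 0 \<times> {z. length z = n \<and> (\<forall>i<n. z ! i \<in> S (Suc i))})
      \<subseteq> {z. length z = Suc n \<and> (\<forall>i<Suc n. z ! i \<in> S i)}"
      by (auto simp: less_Suc_eq_0_disj)
  qed
  have inj: "inj_on (\<lambda>(a,z). a # z) (S 0 \<times> {z. length z = n \<and> (\<forall>i<n. z ! i \<in> S (Suc i))})"
    by (auto simp: inj_on_def)
  show ?case
    unfolding eq card_image[OF inj] card_cartesian_product Suc.IH prod.lessThan_Suc_shift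
    by simp
qed

definition av :: "nat \<Rightarrow> nat list \<Rightarrow> nat list set" where
  "av n x = {z. length z = n \<and> (\<forall>i<n. z ! i \<in> {0,1,2} - {x ! i})}"

lemma card_two: "(a::nat) \<in> {0,1,2} \<Longrightarrow> card ({0,1,2} - {a}) = 2"
  by auto

lemma card_av:
  assumes "\<forall>i<n. x ! i \<in> {0,1,2}"
  shows "card (av n x) = 2 ^ n"
proof -
  have "card (av n x) = (\<Prod>i<n. card ({0::nat,1,2} - {x ! i}))"
    unfolding av_def by (rule card_lists)
  also have "\<dots> = (\<Prod>i<n. 2)"
    using assms card_two by (intro prod.cong) auto
  finally show ?thesis by simp
qed

lemma card_av_int:
  assumes "\<forall>i<n. x ! i \<in> {0,1,2}" "\<forall>i<n. y ! i \<in> {0,1,2}"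
  shows "card (av n x \<inter> av n y) = 2 ^ agree n x y"
proof -
  have e: "av n x \<inter> av n y = {z. length z = n \<and> (\<forall>i<n. z ! i \<in> {0,1,2} - {x ! i, y ! i})}"
    unfolding av_def by auto
  have "card (av n x \<inter> av n y) = (\<Prod>i<n. card ({0::nat,1,2} - {x ! i, y ! i}))"
    unfolding e by (rule card_lists)
  also have "\<dots> = (\<Prod>i<n. if x ! i = y ! i then 2 else 1)"
  proof (intro prod.cong refl)
    fix i assume "i \<in> {..<n}"
    then have "x ! i \<in> {0,1,2}" "y ! i \<in> {0,1,2}" using assms by auto
    then show "card ({0::nat,1,2} - {x ! i, y ! i}) = (if x ! i = y ! i then 2 else 1)"
      by auto
  qed
  also have "\<dots> = 2 ^ card ({..<n} \<inter> {i. x ! i = y ! i})"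
    by (simp add: prod.If_cases)
  also have "{..<n} \<inter> {i. x ! i = y ! i} = {i. i < n \<and> x ! i = y ! i}" by auto
  finally show ?thesis unfolding agree_def .
qed

lemma double_count:
  "finite A \<Longrightarrow> finite B \<Longrightarrow>
   (\<Sum>a\<in>A. card {b\<in>B. R a b}) = (\<Sum>b\<in>B. card {a\<in>A. R a b})"
  using sum.swap_restrict[of A B "\<lambda>_ _. (1::nat)" R] by simp

theorem mainTheorem12:
  fixes n :: nat and C :: "nat list set"
  assumes "trifferent_code n C" and "card C \<ge> 2"
  shows "(\<Sum>P\<in>{{x, y} | x y. x \<in> C \<and> y \<in> C \<and> x \<noteq> y}.
            (2::nat) ^ agree n (SOME x. x \<in> P) (SOME y. y \<in> P \<and> y \<noteq> (SOME x. x \<in> P)))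
         \<le> 2 ^ (n - 1) * card C"
proof -
  define Z where "Z = {z::nat list. length z = n \<and> (\<forall>i<n. z ! i \<in> {0,1,2})}"
  define Pairs where "Pairs = {{x, y} | x y. x \<in> C \<and> y \<in> C \<and> x \<noteq> y}"
  define Cz where "Cz z = {x\<in>C. z \<in> av n x}" for z
  have cZ: "card Z = (\<Prod>i<n. card {0::nat,1,2})"
    unfolding Z_def by (rule card_lists)
  then have finZ: "finite Z" by (intro card_ge_0_finite) simp
  have Csub: "C \<subseteq> ternary_words n" and trif:
    "\<And>x y w. x\<in>C \<Longrightarrow> y\<in>C \<Longrightarrow> w\<in>C \<Longrightarrow> x \<noteq> y \<Longrightarrow> y \<noteq> w \<Longrightarrow> x \<noteq> w \<Longrightarrow> trifferent n x y w"
    using assms(1) unfolding trifferent_code_def by blast+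
  have Cw: "length x = n \<and> (\<forall>i<n. x ! i \<in> {0,1,2})" if "x \<in> C" for x
  proof -
    have "length x = n" "set x \<subseteq> {0,1,2}" using Csub that unfolding ternary_words_def by auto
    then show ?thesis using nth_mem by blast
  qed
  have CZ: "C \<subseteq> Z" unfolding Z_def using Cw by blast
  have finC: "finite C" using finite_subset[OF CZ finZ] .
  have avZ: "av n x \<subseteq> Z" for x unfolding av_def Z_def by auto
  have finP: "finite Pairs"
  proof -
    have "Pairs \<subseteq> Pow C" unfolding Pairs_def by auto
    then show ?thesis using finC by (simp add: finite_subset)
  qed
  have three: False if h: "x\<in>C" "y\<in>C" "w\<in>C" "x \<noteq> y" "y \<noteq> w" "x \<noteq> w"
     "z \<in> av n x" "z \<in> av n y" "z \<in> av n w" for x y w z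
  proof -
    obtain i where i: "i < n" "x ! i \<noteq> y ! i" "y ! i \<noteq> w ! i" "x ! i \<noteq> w ! i"
      using trif[OF h(1-6)] unfolding trifferent_def by blast
    have "x ! i \<in> {0,1,2}" "y ! i \<in> {0,1,2}" "w ! i \<in> {0,1,2}" using Cw h i by auto
    moreover have "z ! i \<in> {0,1,2} - {x ! i}" "z ! i \<in> {0,1,2} - {y ! i}" "z ! i \<in> {0,1,2} - {w ! i}"
      using h(7-9) i unfolding av_def mem_Collect_eq by blast+
    ultimately show False using i by auto
  qed
  define I where "I P = {z\<in>Z. P \<subseteq> Cz z}" for P
  have step1: "(2::nat) ^ agree n (SOME x. x \<in> P) (SOME y. y \<in> P \<and> y \<noteq> (SOME x. x \<in> P))
      = card (I P)" if hP: "P \<in> Pairs" for P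
  proof -
    obtain x y where P: "P = {x,y}" "x\<in>C" "y\<in>C" "x\<noteq>y" using hP unfolding Pairs_def by blast
    define a where "a = (SOME x. x \<in> P)"
    have a: "a \<in> P" unfolding a_def using P by (metis insertI1 someI)
    define b where "b = (SOME y. y \<in> P \<and> y \<noteq> a)"
    have "\<exists>y. y \<in> P \<and> y \<noteq> a" using P a by auto
    then have b: "b \<in> P \<and> b \<noteq> a" unfolding b_def by (rule someI_ex)
    have Pab: "P = {a,b}" using a b P by auto
    have abC: "a \<in> C" "b \<in> C" using a b P by auto
    have "I P = av n a \<inter> av n b" unfolding I_def Pab Cz_def using avZ abC by auto
    then have "card (I P) = 2 ^ agree n a b" using card_av_int Cw abC by simp
    then show ?thesis unfolding a_def b_def by simp
  qed
  have "(\<Sum>P\<in>Pairs. (2::nat) ^ agree n (SOME x. x \<in> P) (SOME y. y \<in> P \<and> y \<noteq> (SOME x. x \<in> P)))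
      = (\<Sum>P\<in>Pairs. card (I P))" using step1 by (rule sum.cong[OF refl])
  also have "\<dots> = (\<Sum>z\<in>Z. card {P\<in>Pairs. P \<subseteq> Cz z})"
    unfolding I_def by (rule double_count[OF finP finZ])
  finally have L: "(\<Sum>P\<in>Pairs. (2::nat) ^ agree n (SOME x. x \<in> P) (SOME y. y \<in> P \<and> y \<noteq> (SOME x. x \<in> P)))
      = (\<Sum>z\<in>Z. card {P\<in>Pairs. P \<subseteq> Cz z})" .
  have step3: "2 * card {P\<in>Pairs. P \<subseteq> Cz z} \<le> card (Cz z)" if "z \<in> Z" for z
  proof (cases "{P\<in>Pairs. P \<subseteq> Cz z} = {}")
    case True then show ?thesis by (simp only: True card.empty)
  next
    case False
    then obtain x y where xy: "{x,y} \<subseteq> Cz z" "x\<in>C" "y\<in>C" "x\<noteq>y" unfolding Pairs_def by blast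
    have CzE: "Cz z = {x,y}"
    proof
      show "{x,y} \<subseteq> Cz z" by fact
      show "Cz z \<subseteq> {x,y}"
      proof
        fix w assume w: "w \<in> Cz z"
        show "w \<in> {x,y}"
        proof (rule ccontr)
          assume "w \<notin> {x,y}"
          then show False using three[of x y w z] xy w unfolding Cz_def by auto
        qed
      qed
    qed
    have "{P\<in>Pairs. P \<subseteq> Cz z} \<subseteq> {{x,y}}"
    proof
      fix P assume "P \<in> {P\<in>Pairs. P \<subseteq> Cz z}"
      then obtain u v where "P = {u,v}" "u \<noteq> v" "P \<subseteq> {x,y}" unfolding Pairs_def CzE by blast
      then show "P \<in> {{x,y}}" by auto
    qed
    then have "card {P\<in>Pairs. P \<subseteq> Cz z} \<le> card {{x,y}}" by (intro card_mono) auto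
    then have "card {P\<in>Pairs. P \<subseteq> Cz z} \<le> 1" by simp
    then show ?thesis using CzE xy by simp
  qed
  have "2 * (\<Sum>z\<in>Z. card {P\<in>Pairs. P \<subseteq> Cz z}) = (\<Sum>z\<in>Z. 2 * card {P\<in>Pairs. P \<subseteq> Cz z})"
    by (simp add: sum_distrib_left)
  also have "\<dots> \<le> (\<Sum>z\<in>Z. card (Cz z))" using step3 by (rule sum_mono)
  also have "\<dots> = (\<Sum>x\<in>C. card {z\<in>Z. z \<in> av n x})"
    unfolding Cz_def by (rule double_count[OF finZ finC])
  also have "\<dots> = (\<Sum>x\<in>C. 2 ^ n)"
  proof (rule sum.cong[OF refl])
    fix x assume "x \<in> C"
    have "{z\<in>Z. z \<in> av n x} = av n x" using avZ by auto
    then show "card {z\<in>Z. z \<in> av n x} = 2 ^ n" using card_av Cw \<open>x \<in> C\<close> by simp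
  qed
  also have "\<dots> = 2 ^ n * card C" by simp
  finally have M: "2 * (\<Sum>z\<in>Z. card {P\<in>Pairs. P \<subseteq> Cz z}) \<le> 2 ^ n * card C" .
  have "n \<noteq> 0"
  proof
    assume "n = 0"
    then have "Z \<subseteq> {[]}" unfolding Z_def by auto
    then have "C \<subseteq> {[]}" using CZ by blast
    then have "card C \<le> card {[]::nat list}" by (intro card_mono) auto
    then have "card C \<le> 1" by simp
    then show False using assms(2) by simp
  qed
  then have "(2::nat) ^ n = 2 * 2 ^ (n - 1)" by (cases n) auto
  then show ?thesis using M L unfolding Pairs_def by simp
qed

end
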